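(* Let $d\ge2$, $n\ge2$, and consider $n$ agents with positions $p_i(t)\in\mathbb R^d$ and dynamics $\dot p_i=v_i$. Let $\mathcal G=(\mathcal V,\mathcal E)$ be an undirected graph on $\mathcal V=\{1,\dots,n\}$ with neighbor sets $\mathcal N_i$, and assume: (A1) $\mathcal G$ has a spanning tree and each agent $i$ measures the bearings $g_{ij}=p_{ij}/\|p_{ij}\|$, $p_{ij}=p_j-p_i$, to its neighbors $j\in\mathcal N_i$; (A2) the desired positions $p_i^*(t)$ satisfy $\dot p_i^*=v_i^*$ with desired velocities $v_i^*(t)$ bounded and known, the desired bearings $g^*_{ij}(t)=p^*_{ij}/\|p^*_{ij}\|$, $p^*_{ij}=p^*_j-p^*_i$, are well defined, and the desired formation $\mathcal G(p^*(t))$ is bearing persistently exciting for all $t\ge0$; (A3) there exists $\epsilon>0$ such that $\|p_{ij}(t)\|>\epsilon$ for all $t\ge0$ and all $\{i,j\}\in\mathcal E$. Let $k_p>0$ and apply the control law $v_i=-k_p\sum_{j\in\mathcal N_i}\pi_{g_{ij}}p^*_{ij}+v_i^*$ for each $i$. Let $\tilde p=p-p^*\in\mathbb R^{dn}$ and $U=1_n\otimes I_d$. Then the equilibrium point $\tilde p=\frac1nUU^\top\tilde p(0)$ of the resulting closed-loop error dynamics is exponentially stable.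
   Context: For $y\in\mathbb S^{d-1}$, $\pi_y=I_d-yy^\top$. Given an arbitrary orientation of $\mathcal G$ with incidence matrix $H\in\mathbb R^{m\times n}$ ($[H]_{ki}=1$ if $i$ is the head of edge $k$, $-1$ if the tail, 0 otherwise), set $\bar H=H\otimes I_d$, $e=\bar Hp$, $g_k=e_k/\|e_k\|$, $\Pi=\mathrm{blkdiag}(\pi_{g_k})$, $L=\bar H^\top\bar H$ and bearing Laplacian $L_B=\bar H^\top\Pi\bar H$ (and analogously for $p^*$). $L_B(p^*(t))$ is PE if there exist $T,\mu>0$ with $\int_t^{t+T}L_B(p^*(\tau))d\tau\ge\mu L$ for all $t$; the formation $\mathcal G(p^*(t))$ is bearing persistently exciting if $\mathcal G$ has a spanning tree and its bearing Laplacian is PE. *)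

theory Defs
  imports "HOL-Analysis.Analysis"
begin

text \<open>Agents are indexed by a finite type 'n (n = CARD('n)), positions live in
  real^'d (d = CARD('d)); a stacked configuration p in R^{dn} is an element of
  real^'d^'n with block p $ i = p_i.\<close>

definition undirected_graph :: "('n \<times> 'n) set \<Rightarrow> bool" where
  "undirected_graph E \<longleftrightarrow> sym E \<and> (\<forall>i. (i, i) \<notin> E)"

definition nbrs :: "('n \<times> 'n) set \<Rightarrow> 'n \<Rightarrow> 'n set" where
  "nbrs E i = {j. (i, j) \<in> E}"

text \<open>Spanning tree: a subgraph T of E on all vertices that is connected and has
  n - 1 undirected edges (i.e. 2(n-1) ordered pairs).\<close>
definition has_spanning_tree :: "('n::finite \<times> 'n) set \<Rightarrow> bool" where
  "has_spanning_tree E \<longleftrightarrow>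
     (\<exists>T. T \<subseteq> E \<and> undirected_graph T \<and> (\<forall>i j. (i, j) \<in> T\<^sup>*) \<and>
          card T = 2 * (CARD('n) - 1))"

definition proj_perp :: "real^'d \<Rightarrow> real^'d \<Rightarrow> real^'d" where
  "proj_perp y z = z - (y \<bullet> z) *\<^sub>R y"

definition relpos :: "real^'d^'n \<Rightarrow> 'n \<Rightarrow> 'n \<Rightarrow> real^'d" where
  "relpos p i j = p $ j - p $ i"

definition bearing :: "real^'d^'n \<Rightarrow> 'n \<Rightarrow> 'n \<Rightarrow> real^'d" where
  "bearing p i j = (1 / norm (relpos p i j)) *\<^sub>R relpos p i j"

text \<open>Bearing Laplacian L_B(p) = Hbar^T Pi Hbar and Laplacian L = Hbar^T Hbar as
  linear operators on R^{dn}:  (L_B(p) x)_i = sum_{j in N_i} pi_{g_ij} (x_i - x_j),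
  which is independent of the chosen orientation.\<close>
definition bearing_laplacian :: "('n::finite \<times> 'n) set \<Rightarrow> real^'d^'n \<Rightarrow> real^'d^'n \<Rightarrow> real^'d^'n" where
  "bearing_laplacian E p x = (\<chi> i. \<Sum>j\<in>nbrs E i. proj_perp (bearing p i j) (x $ i - x $ j))"

definition graph_laplacian :: "('n::finite \<times> 'n) set \<Rightarrow> real^'d^'n \<Rightarrow> real^'d^'n" where
  "graph_laplacian E x = (\<chi> i. \<Sum>j\<in>nbrs E i. x $ i - x $ j)"

text \<open>Persistent excitation: exists T, mu > 0 with
  int_t^{t+T} L_B(p*(tau)) dtau >= mu L (Loewner order) for all t >= 0,
  the matrix inequality written via quadratic forms.\<close>
definition bearing_laplacian_PE :: "('n::finite \<times> 'n) set \<Rightarrow> (real \<Rightarrow> real^'d^'n) \<Rightarrow> bool" where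
  "bearing_laplacian_PE E ps \<longleftrightarrow>
     (\<exists>T \<mu>. T > 0 \<and> \<mu> > 0 \<and>
        (\<forall>t\<ge>0. \<forall>x. integral {t..t+T} (\<lambda>\<tau>. x \<bullet> bearing_laplacian E (ps \<tau>) x)
                      \<ge> \<mu> * (x \<bullet> graph_laplacian E x)))"

definition bearing_PE_formation :: "('n::finite \<times> 'n) set \<Rightarrow> (real \<Rightarrow> real^'d^'n) \<Rightarrow> bool" where
  "bearing_PE_formation E ps \<longleftrightarrow> has_spanning_tree E \<and> bearing_laplacian_PE E ps"

definition control_law ::
  "('n::finite \<times> 'n) set \<Rightarrow> real \<Rightarrow> real^'d^'n \<Rightarrow> real^'d^'n \<Rightarrow> real^'d^'n \<Rightarrow> real^'d^'n" where
  "control_law E kp ps vs p =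
     (\<chi> i. - kp *\<^sub>R (\<Sum>j\<in>nbrs E i. proj_perp (bearing p i j) (relpos ps i j)) + vs $ i)"

text \<open>(1/n) U U^T x with U = 1_n (x) I_d: every block equals the average of blocks.\<close>
definition centroid_proj :: "real^'d^'n::finite \<Rightarrow> real^'d^'n" where
  "centroid_proj x = (\<chi> i. (1 / real CARD('n)) *\<^sub>R (\<Sum>j\<in>UNIV. x $ j))"

text \<open>Closed-loop solution on [t0, oo) satisfying (A3) with constant eps.\<close>
definition closed_loop_solution ::
  "('n::finite \<times> 'n) set \<Rightarrow> real \<Rightarrow> (real \<Rightarrow> real^'d^'n) \<Rightarrow> (real \<Rightarrow> real^'d^'n)
     \<Rightarrow> real \<Rightarrow> real \<Rightarrow> (real \<Rightarrow> real^'d^'n) \<Rightarrow> bool" where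
  "closed_loop_solution E kp ps vs eps t0 p \<longleftrightarrow>
     (\<forall>t\<ge>t0. (p has_vector_derivative control_law E kp (ps t) (vs t) (p t)) (at t within {t0..})) \<and>
     (\<forall>t\<ge>t0. \<forall>i j. (i, j) \<in> E \<longrightarrow> norm (relpos (p t) i j) > eps)"

text \<open>(Uniform, local) exponential stability of the equilibrium
  ptilde = (1/n) U U^T ptilde(t0) of the closed-loop error dynamics,
  ptilde = p - p*.\<close>
definition error_equilibrium_exp_stable ::
  "('n::finite \<times> 'n) set \<Rightarrow> real \<Rightarrow> (real \<Rightarrow> real^'d^'n) \<Rightarrow> (real \<Rightarrow> real^'d^'n) \<Rightarrow> real \<Rightarrow> bool" where
  "error_equilibrium_exp_stable E kp ps vs eps \<longleftrightarrow>
     (\<exists>c lam r. c > 0 \<and> lam > 0 \<and> r > 0 \<and>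
       (\<forall>t0\<ge>0. \<forall>p. closed_loop_solution E kp ps vs eps t0 p \<longrightarrow>
          (let pt = (\<lambda>t. p t - ps t); pe = centroid_proj (pt t0) in
             norm (pt t0 - pe) < r \<longrightarrow>
             (\<forall>t\<ge>t0. norm (pt t - pe) \<le> c * norm (pt t0 - pe) * exp (- lam * (t - t0))))))"

end

theory Submission
  imports Defs
begin


lemma proj_perp_add: "proj_perp g (a + b) = proj_perp g a + proj_perp g b"
  by (simp add: proj_perp_def inner_add_right algebra_simps)
lemma proj_perp_minus: "proj_perp g (- a) = - proj_perp g a"
  by (simp add: proj_perp_def)
lemma proj_perp_diff: "proj_perp g (a - b) = proj_perp g a - proj_perp g b"
  by (simp add: proj_perp_def inner_diff_right algebra_simps)
lemma proj_perp_uminus_g: "proj_perp (- g) a = proj_perp g a"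
  by (simp add: proj_perp_def)

lemma proj_perp_self: "a \<noteq> 0 \<Longrightarrow> proj_perp ((1 / norm a) *\<^sub>R a) a = 0"
  by (simp add: proj_perp_def inner_commute power2_norm_eq_inner[symmetric] power2_eq_square)

lemma bearing_norm: "norm (bearing p i j) = 1 \<or> bearing p i j = 0"
  by (cases "relpos p i j = 0") (auto simp: bearing_def)

lemma bearing_norm_le: "norm (bearing p i j) \<le> 1"
  using bearing_norm[of p i j] by auto

lemma bearing_swap: "bearing p j i = - bearing p i j"
proof -
  have "relpos p j i = - relpos p i j" by (simp add: relpos_def)
  then show ?thesis by (simp add: bearing_def)
qed

lemma proj_sq_expand:
  "(norm (proj_perp g y))\<^sup>2 = y \<bullet> y - 2 * (g \<bullet> y)\<^sup>2 + (g \<bullet> y)\<^sup>2 * (g \<bullet> g)"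
proof -
  have "(norm (proj_perp g y))\<^sup>2 = (y - (g \<bullet> y) *\<^sub>R g) \<bullet> (y - (g \<bullet> y) *\<^sub>R g)"
    unfolding proj_perp_def by (rule power2_norm_eq_inner)
  also have "\<dots> = y \<bullet> y - 2 * (g \<bullet> y)\<^sup>2 + (g \<bullet> y)\<^sup>2 * (g \<bullet> g)"
    by (simp only: inner_diff_left inner_diff_right inner_scaleR_left inner_scaleR_right inner_commute[of g y])
       (simp add: power2_eq_square algebra_simps)
  finally show ?thesis .
qed

lemma proj_inner_sq:
  assumes "norm g = 1 \<or> g = 0"
  shows "y \<bullet> proj_perp g y = (norm (proj_perp g y))\<^sup>2"
proof -
  have gg: "g \<bullet> g = 1 \<or> g = 0" using assms by (metis norm_eq_1)
  have "y \<bullet> proj_perp g y = y \<bullet> y - (g \<bullet> y)\<^sup>2"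
    by (simp add: proj_perp_def inner_diff_right inner_commute power2_eq_square)
  then show ?thesis using gg unfolding proj_sq_expand by auto
qed

lemma proj_norm_le:
  assumes "norm g \<le> 1" shows "norm (proj_perp g y) \<le> norm y"
proof -
  have "g \<bullet> g \<le> 1" 
    using assms by (simp add: power2_norm_eq_inner[symmetric] power_le_one)
  then have "(g \<bullet> y)\<^sup>2 * (g \<bullet> g) \<le> (g \<bullet> y)\<^sup>2" by (simp add: mult_left_le)
  then have "(norm (proj_perp g y))\<^sup>2 \<le> (norm y)\<^sup>2"
  proof -
    have "(norm y)\<^sup>2 = y \<bullet> y" by (rule power2_norm_eq_inner)
    moreover have "0 \<le> (g \<bullet> y)\<^sup>2" by simp
    moreover have "\<And>N Y a b::real. N = Y - 2*a + b \<Longrightarrow> b \<le> a \<Longrightarrow> 0 \<le> a \<Longrightarrow> N \<le> Y" by linarith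
    ultimately show ?thesis using proj_sq_expand[of g y] \<open>(g \<bullet> y)\<^sup>2 * (g \<bullet> g) \<le> (g \<bullet> y)\<^sup>2\<close> by metis
  qed
  then show ?thesis by (rule power2_le_imp_le) simp
qed

lemma proj_diff_le:
  assumes "norm g \<le> 1" "norm w \<le> 1"
  shows "norm (proj_perp g y - proj_perp w y) \<le> 2 * norm (g - w) * norm y"
proof -
  have "proj_perp g y - proj_perp w y = - ((g \<bullet> y) *\<^sub>R (g - w) + ((g - w) \<bullet> y) *\<^sub>R w)"
    by (simp add: proj_perp_def algebra_simps inner_diff_left)
  then have "norm (proj_perp g y - proj_perp w y) \<le> norm ((g \<bullet> y) *\<^sub>R (g - w)) + norm (((g - w) \<bullet> y) *\<^sub>R w)"
    by (metis norm_minus_cancel norm_triangle_ineq)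
  also have "\<dots> \<le> norm g * norm y * norm (g - w) + norm (g - w) * norm y * norm w"
    by (intro add_mono) (simp_all add: Cauchy_Schwarz_ineq2 mult_right_mono mult_left_mono)
  also have "\<dots> \<le> 1 * norm y * norm (g - w) + norm (g - w) * norm y * 1"
    using assms by (intro add_mono mult_right_mono mult_left_mono) auto
  finally show ?thesis by (simp add: algebra_simps)
qed

lemma unit_diff_le:
  fixes a b :: "'a::real_normed_vector"
  assumes "a \<noteq> 0"
  shows "norm ((1 / norm a) *\<^sub>R a - (1 / norm b) *\<^sub>R b) \<le> 2 * norm (a - b) / norm a"
proof (cases "b = 0")
  case True then show ?thesis using assms by simp
next
  case False
  have na: "norm a > 0" using assms by simp
  have "(1 / norm a) *\<^sub>R a - (1 / norm b) *\<^sub>R b = (1 / norm a) *\<^sub>R (a - b) + (1 / norm a - 1 / norm b) *\<^sub>R b"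
    by (simp add: algebra_simps)
  then have "norm ((1 / norm a) *\<^sub>R a - (1 / norm b) *\<^sub>R b) \<le> norm (a - b) / norm a + \<bar>1 / norm a - 1 / norm b\<bar> * norm b"
    by (metis (no_types, lifting) norm_scaleR norm_triangle_ineq abs_of_pos divide_pos_pos na zero_less_one mult.commute times_divide_eq_right mult_1 divide_inverse_commute)
  also have "\<bar>1 / norm a - 1 / norm b\<bar> * norm b = \<bar>norm b - norm a\<bar> / norm a"
    using na False by (simp add: field_simps abs_div abs_mult)
  also have "\<bar>norm b - norm a\<bar> \<le> norm (a - b)"
    by (metis norm_minus_commute norm_triangle_ineq3)
  finally show ?thesis using na by (simp add: divide_right_mono add_divide_distrib[symmetric])
qed




lemma nbrs_Sigma: "Sigma UNIV (nbrs E) = E"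
  by (auto simp: nbrs_def)

lemma sum_nbrs:
  fixes E :: "('n::finite \<times> 'n) set"
  shows "(\<Sum>i\<in>UNIV. \<Sum>j\<in>nbrs E i. f i j) = (\<Sum>(i,j)\<in>E. f i j)"
proof -
  have "(\<Sum>i\<in>UNIV. \<Sum>j\<in>nbrs E i. f i j) = (\<Sum>(i,j)\<in>Sigma UNIV (nbrs E). f i j)"
    by (rule sum.Sigma) auto
  then show ?thesis by (simp add: nbrs_Sigma)
qed

lemma sum_swap_sym:
  assumes "sym E"
  shows "(\<Sum>(i,j)\<in>E. f i j) = (\<Sum>(i,j)\<in>E. f j i)"
proof -
  have "(\<Sum>(i,j)\<in>E. f j i) = (\<Sum>(i,j)\<in>prod.swap ` E. f i j)"
    by (subst sum.reindex) (auto simp: inj_on_def case_prod_beta)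
  also have "prod.swap ` E = E" using assms unfolding sym_def by (auto simp: image_iff) (metis swap_simp)
  finally show ?thesis by simp
qed

lemma quad_sym:
  fixes x :: "'a::real_inner^'n::finite" and \<Phi> :: "'n \<Rightarrow> 'n \<Rightarrow> 'a \<Rightarrow> 'a"
  assumes "sym E" and s: "\<And>i j y. \<Phi> j i y = \<Phi> i j y" and m: "\<And>i j y. \<Phi> i j (- y) = - \<Phi> i j y"
  shows "(\<Sum>i\<in>UNIV. x$i \<bullet> (\<Sum>j\<in>nbrs E i. \<Phi> i j (x$i - x$j))) =
         (1/2) * (\<Sum>(i,j)\<in>E. (x$i - x$j) \<bullet> \<Phi> i j (x$i - x$j))"
proof -
  define h where "h i j = x$i \<bullet> \<Phi> i j (x$i - x$j)" for i j
  have "(\<Sum>i\<in>UNIV. x$i \<bullet> (\<Sum>j\<in>nbrs E i. \<Phi> i j (x$i - x$j))) = (\<Sum>(i,j)\<in>E. h i j)"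
    by (simp add: inner_sum_right sum_nbrs h_def)
  moreover have "(\<Sum>(i,j)\<in>E. h i j) = (\<Sum>(i,j)\<in>E. h j i)"
    by (rule sum_swap_sym[OF assms(1)])
  moreover have "(\<Sum>(i,j)\<in>E. h i j) + (\<Sum>(i,j)\<in>E. h j i) = (\<Sum>(i,j)\<in>E. (x$i - x$j) \<bullet> \<Phi> i j (x$i - x$j))"
  proof -
    have "h i j + h j i = (x$i - x$j) \<bullet> \<Phi> i j (x$i - x$j)" for i j
    proof -
      have "x$j - x$i = - (x$i - x$j)" by simp
      then have "\<Phi> j i (x$j - x$i) = - \<Phi> i j (x$i - x$j)" using s m by metis
      then show ?thesis by (simp add: h_def inner_diff_left)
    qed
    then show ?thesis by (simp add: sum.distrib[symmetric] case_prod_beta)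
  qed
  ultimately show ?thesis by linarith
qed

lemma sum_antisym_zero:
  fixes \<Phi> :: "'n::finite \<Rightarrow> 'n \<Rightarrow> 'a::real_vector"
  assumes "sym E" and a: "\<And>i j. \<Phi> j i = - \<Phi> i j"
  shows "(\<Sum>i\<in>UNIV. \<Sum>j\<in>nbrs E i. \<Phi> i j) = 0"
proof -
  have "(\<Sum>(i,j)\<in>E. \<Phi> i j) = (\<Sum>(i,j)\<in>E. \<Phi> j i)" by (rule sum_swap_sym[OF assms(1)])
  also have "\<dots> = (\<Sum>(i,j)\<in>E. - \<Phi> i j)" by (rule sum.cong) (auto intro: a)
  also have "\<dots> = - (\<Sum>(i,j)\<in>E. \<Phi> i j)" by (simp add: case_prod_beta sum_negf)
  finally have "(2::real) *\<^sub>R (\<Sum>(i,j)\<in>E. \<Phi> i j) = 0" by (simp add: scaleR_2 eq_neg_iff_add_eq_0)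
  then have "(\<Sum>(i,j)\<in>E. \<Phi> i j) = 0" by simp
  then show ?thesis by (simp add: sum_nbrs)
qed

definition Wq :: "('n::finite \<times> 'n) set \<Rightarrow> real^'d^'n \<Rightarrow> real^'d^'n \<Rightarrow> real" where
  "Wq E p x = (\<Sum>(i,j)\<in>E. (norm (proj_perp (bearing p i j) (x$i - x$j)))\<^sup>2)"

definition Sq :: "('n::finite \<times> 'n) set \<Rightarrow> real^'d^'n \<Rightarrow> real" where
  "Sq E x = (\<Sum>(i,j)\<in>E. (norm (x$i - x$j))\<^sup>2)"

lemma BL_quad:
  assumes "sym E"
  shows "x \<bullet> bearing_laplacian E p x = Wq E p x / 2"
proof -
  have "x \<bullet> bearing_laplacian E p x = (\<Sum>i\<in>UNIV. x$i \<bullet> (\<Sum>j\<in>nbrs E i. proj_perp (bearing p i j) (x$i - x$j)))"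
    by (simp add: bearing_laplacian_def inner_vec_def)
  also have "\<dots> = (1/2) * (\<Sum>(i,j)\<in>E. (x$i - x$j) \<bullet> proj_perp (bearing p i j) (x$i - x$j))"
    by (rule quad_sym[OF assms]) (metis bearing_swap proj_perp_uminus_g, simp add: proj_perp_minus)
  also have "\<dots> = Wq E p x / 2"
    by (simp add: Wq_def proj_inner_sq[OF bearing_norm] case_prod_beta)
  finally show ?thesis .
qed

lemma L_quad:
  assumes "sym E"
  shows "x \<bullet> graph_laplacian E x = Sq E x / 2"
proof -
  have "x \<bullet> graph_laplacian E x = (\<Sum>i\<in>UNIV. x$i \<bullet> (\<Sum>j\<in>nbrs E i. id (x$i - x$j)))"
    by (simp add: graph_laplacian_def inner_vec_def)
  also have "\<dots> = (1/2) * (\<Sum>(i,j)\<in>E. (x$i - x$j) \<bullet> id (x$i - x$j))"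
    by (rule quad_sym[OF assms]) simp_all
  also have "\<dots> = Sq E x / 2"
    by (simp add: Sq_def case_prod_beta power2_norm_eq_inner)
  finally show ?thesis .
qed

lemma BL_sum_zero:
  assumes "sym E"
  shows "(\<Sum>i\<in>UNIV. bearing_laplacian E p x $ i) = 0"
proof -
  have *: "proj_perp (bearing p j i) (x$j - x$i) = - proj_perp (bearing p i j) (x$i - x$j)" for i j
  proof -
    have "x$j - x$i = -(x$i - x$j)" by simp
    then show ?thesis by (simp only: bearing_swap[of p i j] proj_perp_uminus_g proj_perp_minus)
  qed
  have "(\<Sum>i\<in>UNIV. \<Sum>j\<in>nbrs E i. (\<lambda>i j. proj_perp (bearing p i j) (x$i - x$j)) i j) = 0"
    using sum_antisym_zero[OF assms, of "\<lambda>i j. proj_perp (bearing p i j) (x$i - x$j)"] * by blast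
  then show ?thesis by (simp add: bearing_laplacian_def)
qed

lemma norm_vec_le_sum: "norm (x :: 'a::real_normed_vector^'n::finite) \<le> (\<Sum>i\<in>UNIV. norm (x$i))"
  unfolding norm_vec_def by (rule L2_set_le_sum) simp

lemma BL_norm:
  shows "norm (bearing_laplacian E p x) \<le> (\<Sum>(i,j)\<in>E. norm (proj_perp (bearing p i j) (x$i - x$j)))"
proof -
  have "norm (bearing_laplacian E p x) \<le> (\<Sum>i\<in>UNIV. norm (bearing_laplacian E p x $ i))"
    by (rule norm_vec_le_sum)
  also have "\<dots> \<le> (\<Sum>i\<in>UNIV. \<Sum>j\<in>nbrs E i. norm (proj_perp (bearing p i j) (x$i - x$j)))"
    unfolding bearing_laplacian_def vec_lambda_beta by (intro sum_mono norm_sum)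
  also have "\<dots> = (\<Sum>(i,j)\<in>E. norm (proj_perp (bearing p i j) (x$i - x$j)))"
    by (rule sum_nbrs)
  finally show ?thesis .
qed




lemma Sq_nonneg: "Sq E x \<ge> 0"
  unfolding Sq_def by (intro sum_nonneg) auto

lemma Sq_term: "(i, j) \<in> E \<Longrightarrow> (norm (x$i - x$j))\<^sup>2 \<le> Sq E x"
  unfolding Sq_def
  using member_le_sum[of "(i,j)" E "\<lambda>(i,j). (norm (x$i - x$j))\<^sup>2"] by auto

lemma norm_sq_vec: "(norm (x :: 'a::real_normed_vector^'n::finite))\<^sup>2 = (\<Sum>i\<in>UNIV. (norm (x$i))\<^sup>2)"
  unfolding norm_vec_def L2_set_def by (simp add: sum_nonneg)

lemma path_bound:
  fixes E :: "('n::finite \<times> 'n) set"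
  assumes "(i, j) \<in> T\<^sup>*" "T \<subseteq> E"
  shows "\<exists>K\<ge>0. \<forall>x::real^'d^'n. (norm (x$i - x$j))\<^sup>2 \<le> K * Sq E x"
  using assms(1)
proof (induction rule: rtrancl_induct)
  case base then show ?case by (intro exI[of _ 0]) (simp add: Sq_nonneg)
next
  case (step k j)
  from step.IH obtain K where K: "K \<ge> 0" "\<And>x::real^'d^'n. (norm (x$i - x$k))\<^sup>2 \<le> K * Sq E x" by auto
  have kj: "(k, j) \<in> E" using step.hyps(2) assms(2) by auto
  show ?case
  proof (intro exI[of _ "2 * K + 2"] conjI allI)
    show "0 \<le> 2 * K + 2" using K by simp
    fix x :: "real^'d^'n"
    have "norm (x$i - x$j) \<le> norm (x$i - x$k) + norm (x$k - x$j)"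
      by (metis norm_triangle_ineq diff_add_cancel add_diff_eq)
    then have "(norm (x$i - x$j))\<^sup>2 \<le> (norm (x$i - x$k) + norm (x$k - x$j))\<^sup>2"
      by (simp add: power_mono)
    also have "\<dots> \<le> 2 * (norm (x$i - x$k))\<^sup>2 + 2 * (norm (x$k - x$j))\<^sup>2"
      by (smt (verit) zero_le_power2 power2_sum power2_diff)
    also have "\<dots> \<le> 2 * (K * Sq E x) + 2 * Sq E x"
      using K(2)[of x] Sq_term[OF kj, of x] by simp
    finally show "(norm (x$i - x$j))\<^sup>2 \<le> (2 * K + 2) * Sq E x" by (simp add: algebra_simps)
  qed
qed

lemma conn_bound:
  fixes E :: "('n::finite \<times> 'n) set"
  assumes "has_spanning_tree E"
  shows "\<exists>K>0. \<forall>x::real^'d^'n. (\<Sum>i\<in>UNIV. x$i) = 0 \<longrightarrow> (norm x)\<^sup>2 \<le> K * Sq E x"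
proof -
  from assms obtain T where T: "T \<subseteq> E" "\<And>i j. (i, j) \<in> T\<^sup>*"
    unfolding has_spanning_tree_def by blast
  have "\<forall>ij. \<exists>K\<ge>0. \<forall>x::real^'d^'n. (norm (x$fst ij - x$snd ij))\<^sup>2 \<le> K * Sq E x"
    using path_bound[OF T(2) T(1)] by blast
  then obtain Kf where Kf: "\<And>ij. Kf ij \<ge> 0" "\<And>ij x. (norm ((x::real^'d^'n)$fst ij - x$snd ij))\<^sup>2 \<le> Kf ij * Sq E x"
    by metis
  define Kt where "Kt = (\<Sum>ij\<in>UNIV. Kf ij)"
  have Kt: "(norm ((x::real^'d^'n)$i - x$j))\<^sup>2 \<le> Kt * Sq E x" for x i j
  proof -
    have "Kf (i,j) \<le> Kt" unfolding Kt_def by (rule member_le_sum) (auto simp: Kf)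
    then have "Kf (i,j) * Sq E x \<le> Kt * Sq E x" by (simp add: mult_right_mono Sq_nonneg)
    then show ?thesis using Kf(2)[where ij="(i,j)" and x=x] by simp
  qed
  have Kt0: "Kt \<ge> 0" unfolding Kt_def by (simp add: sum_nonneg Kf)
  define n where "n = real CARD('n)"
  have n0: "n > 0" unfolding n_def by simp
  show ?thesis
  proof (intro exI[of _ "n * Kt + 1"] conjI allI impI)
    show "0 < n * Kt + 1" using n0 Kt0 by (simp add: add_nonneg_pos)
    fix x :: "real^'d^'n"
    assume s0: "(\<Sum>i\<in>UNIV. x$i) = 0"
    have xi: "(norm (x$i))\<^sup>2 \<le> Kt * Sq E x" for i
    proof -
      have "(\<Sum>j\<in>UNIV. x$i - x$j) = n *\<^sub>R x$i"
        using s0 by (simp add: sum_subtractf n_def scaleR_conv_of_real)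
      then have "x$i = (1/n) *\<^sub>R (\<Sum>j\<in>UNIV. x$i - x$j)" using n0 by simp
      then have "norm (x$i) \<le> (1/n) * (\<Sum>j\<in>UNIV. norm (x$i - x$j))"
        using n0 by (metis norm_scaleR abs_of_pos divide_pos_pos zero_less_one norm_sum mult_left_mono less_imp_le)
      also have "\<dots> \<le> (1/n) * (\<Sum>j\<in>(UNIV::'n set). sqrt (Kt * Sq E x))"
      proof -
        have "norm (x$i - x$j) \<le> sqrt (Kt * Sq E x)" for j by (rule real_le_rsqrt) (rule Kt)
        then have "(\<Sum>j\<in>UNIV. norm (x$i - x$j)) \<le> (\<Sum>j\<in>(UNIV::'n set). sqrt (Kt * Sq E x))"
          by (intro sum_mono) auto
        then show ?thesis using n0 by (intro mult_left_mono) auto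
      qed
      also have "\<dots> = sqrt (Kt * Sq E x)" using n0 by (simp add: n_def)
      finally have "norm (x$i) \<le> sqrt (Kt * Sq E x)" .
      then show ?thesis using Kt0 Sq_nonneg
        by (metis norm_ge_zero power_mono real_sqrt_pow2 zero_le_mult_iff)
    qed
    have "(norm x)\<^sup>2 = (\<Sum>i\<in>UNIV. (norm (x$i))\<^sup>2)" by (rule norm_sq_vec)
    also have "\<dots> \<le> (\<Sum>i\<in>(UNIV::'n set). Kt * Sq E x)" by (intro sum_mono xi)
    also have "\<dots> = n * Kt * Sq E x" by (simp add: n_def)
    also have "\<dots> \<le> (n * Kt + 1) * Sq E x" using Sq_nonneg[of E x] by (simp add: algebra_simps)
    finally show "(norm x)\<^sup>2 \<le> (n * Kt + 1) * Sq E x" .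
  qed
qed




lemma proj_relpos:
  assumes "relpos q i j \<noteq> 0" "c$i = c$j"
  shows "proj_perp (bearing q i j) (relpos s i j) = proj_perp (bearing q i j) ((q - s - c)$i - (q - s - c)$j)"
proof -
  have "(q - s - c)$i - (q - s - c)$j = relpos s i j - relpos q i j"
    using assms(2) by (simp add: relpos_def algebra_simps)
  moreover have "proj_perp (bearing q i j) (relpos q i j) = 0"
    unfolding bearing_def by (rule proj_perp_self[OF assms(1)])
  ultimately show ?thesis by (simp add: proj_perp_diff)
qed

lemma centroid_const: "centroid_proj x $ i = centroid_proj x $ j"
  by (simp add: centroid_proj_def)

lemma vd_inner_self:
  assumes "(f has_vector_derivative v) (at t within S)"
  shows "((\<lambda>x. f x \<bullet> f x) has_vector_derivative (2 * (f t \<bullet> v))) (at t within S)"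
  unfolding has_vector_derivative_def
proof (rule has_derivative_eq_rhs)
  show "((\<lambda>x. f x \<bullet> f x) has_derivative (\<lambda>h. f t \<bullet> (h *\<^sub>R v) + (h *\<^sub>R v) \<bullet> f t)) (at t within S)"
    using has_derivative_inner[OF assms[unfolded has_vector_derivative_def] assms[unfolded has_vector_derivative_def]] .
  show "(\<lambda>h. f t \<bullet> (h *\<^sub>R v) + (h *\<^sub>R v) \<bullet> f t) = (\<lambda>h. h *\<^sub>R (2 * (f t \<bullet> v)))"
    by (auto simp: inner_commute)
qed

lemma edge_bound:
  fixes q s c e x0 :: "real^'d::finite^'n::finite"
  assumes a: "norm (relpos q i j) > eps" and eps: "eps > 0" and e: "e = q - s - c" and c: "c$i = c$j"
  shows "(norm (proj_perp (bearing s i j) (x0$i - x0$j)))\<^sup>2 \<le>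
     3 * (norm (proj_perp (bearing q i j) (e$i - e$j)))\<^sup>2 + 12 * (norm (x0 - e))\<^sup>2
     + 768 * (norm e)\<^sup>2 * (norm x0)\<^sup>2 / eps\<^sup>2"
proof -
  define g where "g = bearing q i j"
  define w where "w = bearing s i j"
  define y where "y = x0$i - x0$j"
  define z where "z = e$i - e$j"
  have an: "relpos q i j \<noteq> 0" using a eps by force
  have ab: "relpos q i j - relpos s i j = e$j - e$i"
    using c by (simp add: e relpos_def algebra_simps)
  have "norm (g - w) \<le> 2 * norm (relpos q i j - relpos s i j) / norm (relpos q i j)"
    unfolding g_def w_def bearing_def by (rule unit_diff_le[OF an])
  also have "norm (relpos q i j - relpos s i j) \<le> 2 * norm e"
  proof -
    have "norm (e$j - e$i) \<le> norm (e$j) + norm (e$i)" by (rule norm_triangle_ineq4)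
    also have "\<dots> \<le> 2 * norm e" using Finite_Cartesian_Product.norm_nth_le[of e i] Finite_Cartesian_Product.norm_nth_le[of e j] by simp
    finally show ?thesis using ab by simp
  qed
  finally have "norm (g - w) \<le> 2 * (2 * norm e) / norm (relpos q i j)"
    using an by (simp add: divide_right_mono)
  also have "\<dots> \<le> 4 * norm e / eps"
    using a eps by (simp add: frac_le)
  finally have gw: "norm (g - w) \<le> 4 * norm e / eps" .
  have yn: "norm y \<le> 2 * norm x0"
  proof -
    have "norm y \<le> norm (x0$i) + norm (x0$j)" unfolding y_def by (rule norm_triangle_ineq4)
    then show ?thesis using Finite_Cartesian_Product.norm_nth_le[of x0 i] Finite_Cartesian_Product.norm_nth_le[of x0 j] by simp
  qed
  have yz: "norm (y - z) \<le> 2 * norm (x0 - e)"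
  proof -
    have "y - z = (x0 - e)$i - (x0 - e)$j" by (simp add: y_def z_def)
    then have "norm (y - z) \<le> norm ((x0 - e)$i) + norm ((x0 - e)$j)" by (simp add: norm_triangle_ineq4)
    then show ?thesis using Finite_Cartesian_Product.norm_nth_le[of "x0 - e" i] Finite_Cartesian_Product.norm_nth_le[of "x0 - e" j] by simp
  qed
  have g1: "norm g \<le> 1" and w1: "norm w \<le> 1" unfolding g_def w_def by (rule bearing_norm_le)+
  have "norm (proj_perp w y) \<le> norm (proj_perp g y) + norm (proj_perp g y - proj_perp w y)"
    using norm_triangle_sub[of "proj_perp w y" "proj_perp g y"] by (simp add: norm_minus_commute)
  also have "norm (proj_perp g y - proj_perp w y) \<le> 2 * norm (g - w) * norm y"
    by (rule proj_diff_le[OF g1 w1])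
  also have "norm (proj_perp g y) \<le> norm (proj_perp g z) + norm (y - z)"
  proof -
    have "proj_perp g y = proj_perp g z + proj_perp g (y - z)" by (simp add: proj_perp_add[symmetric])
    then have "norm (proj_perp g y) \<le> norm (proj_perp g z) + norm (proj_perp g (y - z))"
      by (simp add: norm_triangle_ineq)
    then show ?thesis using proj_norm_le[OF g1, of "y - z"] by simp
  qed
  finally have "norm (proj_perp w y) \<le> norm (proj_perp g z) + norm (y - z) + 2 * norm (g - w) * norm y" by simp
  also have "\<dots> \<le> norm (proj_perp g z) + 2 * norm (x0 - e) + 2 * (4 * norm e / eps) * (2 * norm x0)"
    using yz gw yn eps by (intro add_mono mult_mono) auto
  finally have main: "norm (proj_perp w y) \<le> norm (proj_perp g z) + 2 * norm (x0 - e) + 16 * norm e * norm x0 / eps"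
    by simp
  have sq: "\<And>u A B C::real. 0 \<le> u \<Longrightarrow> u \<le> A + B + C \<Longrightarrow> u\<^sup>2 \<le> 3 * (A\<^sup>2 + B\<^sup>2 + C\<^sup>2)"
  proof -
    fix u A B C :: real assume "0 \<le> u" "u \<le> A + B + C"
    then have "u\<^sup>2 \<le> (A + B + C)\<^sup>2" by (simp add: power_mono)
    also have "\<dots> \<le> 3 * (A\<^sup>2 + B\<^sup>2 + C\<^sup>2)"
      using sum_squares_bound[of "A - B" "B - C"] zero_le_power2[of "A - B"] zero_le_power2[of "B - C"] zero_le_power2[of "A - C"]
      by (simp add: power2_eq_square algebra_simps)
    finally show "u\<^sup>2 \<le> 3 * (A\<^sup>2 + B\<^sup>2 + C\<^sup>2)" .
  qed
  have "(norm (proj_perp w y))\<^sup>2 \<le> 3 * ((norm (proj_perp g z))\<^sup>2 + (2 * norm (x0 - e))\<^sup>2 + (16 * norm e * norm x0 / eps)\<^sup>2)"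
    by (rule sq[OF norm_ge_zero main])
  also have "\<dots> = 3 * (norm (proj_perp g z))\<^sup>2 + 12 * (norm (x0 - e))\<^sup>2 + 768 * (norm e)\<^sup>2 * (norm x0)\<^sup>2 / eps\<^sup>2"
    by (simp add: power2_eq_square field_simps)
  finally show ?thesis by (simp add: g_def w_def y_def z_def)
qed

context
  fixes E :: "('n::finite \<times> 'n) set" and kp eps t0 :: real
    and ps vs p :: "real \<Rightarrow> real^'d::finite^'n"
  assumes symE: "sym E" and kp: "kp > 0" and eps: "eps > 0" and t0: "t0 \<ge> 0"
    and dps: "\<And>t. t \<ge> 0 \<Longrightarrow> (ps has_vector_derivative vs t) (at t within {0..})"
    and sol: "closed_loop_solution E kp ps vs eps t0 p"
begin

definition "ee \<tau> = p \<tau> - ps \<tau> - centroid_proj (p t0 - ps t0)"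
definition "VV \<tau> = (norm (ee \<tau>))\<^sup>2"
definition "WW \<tau> = Wq E (p \<tau>) (ee \<tau>)"

lemma sol_deriv: "t \<ge> t0 \<Longrightarrow> (p has_vector_derivative control_law E kp (ps t) (vs t) (p t)) (at t within {t0..})"
  using sol unfolding closed_loop_solution_def by blast

lemma sol_eps: "t \<ge> t0 \<Longrightarrow> (i, j) \<in> E \<Longrightarrow> norm (relpos (p t) i j) > eps"
  using sol unfolding closed_loop_solution_def by blast

lemma control_eq:
  assumes "t \<ge> t0"
  shows "control_law E kp (ps t) (vs t) (p t) - vs t = - kp *\<^sub>R bearing_laplacian E (p t) (ee t)"
proof -
  have "(\<Sum>j\<in>nbrs E i. proj_perp (bearing (p t) i j) (relpos (ps t) i j)) =
        (\<Sum>j\<in>nbrs E i. proj_perp (bearing (p t) i j) (ee t $ i - ee t $ j))" for i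
  proof (rule sum.cong)
    fix j assume "j \<in> nbrs E i"
    then have "(i, j) \<in> E" by (simp add: nbrs_def)
    then have "relpos (p t) i j \<noteq> 0" using sol_eps[OF assms] eps by force
    then show "proj_perp (bearing (p t) i j) (relpos (ps t) i j) = proj_perp (bearing (p t) i j) (ee t $ i - ee t $ j)"
      unfolding ee_def by (rule proj_relpos) (rule centroid_const)
  qed simp
  then show ?thesis
    by (simp add: vec_eq_iff control_law_def bearing_laplacian_def)
qed

lemma ee_deriv:
  assumes "t \<ge> t0"
  shows "(ee has_vector_derivative (- kp *\<^sub>R bearing_laplacian E (p t) (ee t))) (at t within {t0..})"
proof -
  have "(ps has_vector_derivative vs t) (at t within {t0..})"
    using dps[of t] assms t0 by (auto intro: has_vector_derivative_within_subset)
  then have "((\<lambda>\<tau>. p \<tau> - ps \<tau> - centroid_proj (p t0 - ps t0)) has_vector_derivative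
      (control_law E kp (ps t) (vs t) (p t) - vs t - 0)) (at t within {t0..})"
    by (intro has_vector_derivative_diff sol_deriv[OF assms] has_vector_derivative_const)
  then show ?thesis using control_eq[OF assms] by (simp add: ee_def[abs_def])
qed

lemma VV_deriv:
  assumes "t \<ge> t0"
  shows "(VV has_vector_derivative (- kp * WW t)) (at t within {t0..})"
proof -
  have VVe: "VV = (\<lambda>x. ee x \<bullet> ee x)" by (simp add: VV_def[abs_def] power2_norm_eq_inner)
  have eq: "2 * (ee t \<bullet> (- kp *\<^sub>R bearing_laplacian E (p t) (ee t))) = - kp * WW t"
    by (simp add: BL_quad[OF symE] WW_def)
  have "((\<lambda>x. ee x \<bullet> ee x) has_vector_derivative (2 * (ee t \<bullet> (- kp *\<^sub>R bearing_laplacian E (p t) (ee t))))) (at t within {t0..})"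
    by (rule vd_inner_self[OF ee_deriv[OF assms]])
  then show ?thesis unfolding eq VVe[symmetric] .
qed

lemma WW_nonneg: "WW t \<ge> 0"
  unfolding WW_def Wq_def by (intro sum_nonneg) auto

lemma VV_int:
  assumes "t0 \<le> a" "a \<le> b"
  shows "((\<lambda>\<tau>. - kp * WW \<tau>) has_integral (VV b - VV a)) {a..b}"
  by (rule fundamental_theorem_of_calculus[OF assms(2)])
     (rule has_vector_derivative_within_subset[OF VV_deriv], use assms in auto)

lemma ee_int:
  assumes "t0 \<le> a" "a \<le> b"
  shows "((\<lambda>\<tau>. - kp *\<^sub>R bearing_laplacian E (p \<tau>) (ee \<tau>)) has_integral (ee b - ee a)) {a..b}"
  by (rule fundamental_theorem_of_calculus[OF assms(2)])
     (rule has_vector_derivative_within_subset[OF ee_deriv], use assms in auto)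

lemma VV_mono:
  assumes "t0 \<le> a" "a \<le> b"
  shows "VV b \<le> VV a"
proof -
  have "VV b - VV a \<le> 0"
    using has_integral_le[OF VV_int[OF assms] has_integral_0[of "{a..b}"]] kp WW_nonneg
    by (simp add: mult_nonneg_nonneg)
  then show ?thesis by simp
qed

lemma ee_sum:
  assumes "t0 \<le> b"
  shows "(\<Sum>i\<in>UNIV. ee b $ i) = 0"
proof -
  define h where "h = (\<lambda>x::real^'d^'n. \<Sum>i\<in>UNIV. x $ i)"
  have bl: "bounded_linear h" unfolding h_def by (intro bounded_linear_sum) auto
  have "((h \<circ> (\<lambda>\<tau>. - kp *\<^sub>R bearing_laplacian E (p \<tau>) (ee \<tau>))) has_integral h (ee b - ee t0)) {t0..b}"
    by (rule has_integral_linear[OF ee_int[OF order_refl assms] bl])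
  moreover have "h \<circ> (\<lambda>\<tau>. - kp *\<^sub>R bearing_laplacian E (p \<tau>) (ee \<tau>)) = (\<lambda>\<tau>. 0)"
  proof
    fix \<tau>
    have "(\<Sum>i\<in>UNIV. (- kp *\<^sub>R bearing_laplacian E (p \<tau>) (ee \<tau>)) $ i) = - kp *\<^sub>R (\<Sum>i\<in>UNIV. bearing_laplacian E (p \<tau>) (ee \<tau>) $ i)"
      by (simp add: scaleR_sum_right)
    then show "(h \<circ> (\<lambda>\<tau>. - kp *\<^sub>R bearing_laplacian E (p \<tau>) (ee \<tau>))) \<tau> = 0"
      by (simp add: h_def BL_sum_zero[OF symE])
  qed
  ultimately have "h (ee b - ee t0) = 0"
    using has_integral_unique has_integral_0 by metis
  then have "h (ee b) = h (ee t0)" using bl by (simp add: linear_diff bounded_linear.linear)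
  moreover have "h (ee t0) = 0"
  proof -
    have "h (ee t0) = (\<Sum>i\<in>UNIV. (p t0 - ps t0) $ i) - (\<Sum>i\<in>(UNIV::'n set). centroid_proj (p t0 - ps t0) $ i)"
      by (simp add: h_def ee_def sum_subtractf)
    also have "(\<Sum>i\<in>(UNIV::'n set). centroid_proj (p t0 - ps t0) $ i) = (\<Sum>i\<in>UNIV. (p t0 - ps t0) $ i)"
    proof -
      have "(\<Sum>i\<in>(UNIV::'n set). centroid_proj (p t0 - ps t0) $ i) = real CARD('n) *\<^sub>R ((1 / real CARD('n)) *\<^sub>R (\<Sum>j\<in>UNIV. (p t0 - ps t0) $ j))"
        by (simp add: centroid_proj_def scaleR_conv_of_real del: scaleR_scaleR)
      also have "\<dots> = (\<Sum>j\<in>UNIV. (p t0 - ps t0) $ j)" by simp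
      finally show ?thesis .
    qed
    finally show ?thesis by simp
  qed
  ultimately show ?thesis by (simp add: h_def)
qed

lemma ee_move:
  assumes "t0 \<le> a" "a \<le> b" "\<beta> > 0"
  shows "norm (ee b - ee a) \<le> (VV a - VV b) / (2 * \<beta>) + kp * real (card E) * \<beta> * (b - a) / 2"
proof -
  define g where "g \<tau> = (-1 / (2 * \<beta>)) * (- kp * WW \<tau>) + kp * real (card E) * \<beta> / 2" for \<tau>
  have gi: "(g has_integral ((-1 / (2 * \<beta>)) * (VV b - VV a) + (b - a) * (kp * real (card E) * \<beta> / 2))) {a..b}"
    unfolding g_def
    by (intro has_integral_add has_integral_cmult_real VV_int[OF assms(1,2)])
       (use has_integral_const_real[of "kp * real (card E) * \<beta> / 2" a b] assms(2) in \<open>simp add: content_real\<close>)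
  have fi: "((\<lambda>\<tau>. - kp *\<^sub>R bearing_laplacian E (p \<tau>) (ee \<tau>)) has_integral (ee b - ee a)) {a..b}"
    by (rule ee_int[OF assms(1,2)])
  have le: "norm (- kp *\<^sub>R bearing_laplacian E (p \<tau>) (ee \<tau>)) \<le> g \<tau>" for \<tau>
  proof -
    have am: "u \<le> u\<^sup>2 / (2 * \<beta>) + \<beta> / 2" for u :: real
    proof -
      have "0 \<le> (u - \<beta>)\<^sup>2" by simp
      then have "2 * \<beta> * u \<le> u\<^sup>2 + \<beta>\<^sup>2" by (simp add: power2_eq_square algebra_simps)
      then show ?thesis using assms(3) by (simp add: field_simps power2_eq_square)
    qed
    have "norm (- kp *\<^sub>R bearing_laplacian E (p \<tau>) (ee \<tau>)) = kp * norm (bearing_laplacian E (p \<tau>) (ee \<tau>))"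
      using kp by simp
    also have "\<dots> \<le> kp * (\<Sum>(i,j)\<in>E. norm (proj_perp (bearing (p \<tau>) i j) (ee \<tau> $ i - ee \<tau> $ j)))"
      using kp BL_norm by (intro mult_left_mono) auto
    also have "\<dots> \<le> kp * (\<Sum>(i,j)\<in>E. (norm (proj_perp (bearing (p \<tau>) i j) (ee \<tau> $ i - ee \<tau> $ j)))\<^sup>2 / (2 * \<beta>) + \<beta> / 2)"
      using kp by (intro mult_left_mono sum_mono) (auto simp: case_prod_beta am)
    also have "\<dots> = kp * (WW \<tau> / (2 * \<beta>) + real (card E) * \<beta> / 2)"
      by (simp add: WW_def Wq_def sum.distrib sum_divide_distrib case_prod_beta)
    also have "\<dots> = g \<tau>" by (simp add: g_def algebra_simps)
    finally show ?thesis .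
  qed
  have "norm (ee b - ee a) \<le> (-1 / (2 * \<beta>)) * (VV b - VV a) + (b - a) * (kp * real (card E) * \<beta> / 2)"
    using integral_norm_bound_integral[OF has_integral_integrable[OF fi] has_integral_integrable[OF gi] le]
    unfolding integral_unique[OF fi] integral_unique[OF gi] .
  moreover have "(-1 / (2 * \<beta>)) * (VV b - VV a) + (b - a) * (kp * real (card E) * \<beta> / 2) =
     (VV a - VV b) / (2 * \<beta>) + kp * real (card E) * \<beta> * (b - a) / 2"
    using assms(3) by (simp add: field_simps)
  ultimately show ?thesis by linarith
qed

lemma pe_cmp:
  assumes "t \<ge> t0"
  shows "Wq E (ps t) x0 \<le> 3 * WW t + real (card E) * (12 * (norm (x0 - ee t))\<^sup>2 + 768 * (norm (ee t))\<^sup>2 * (norm x0)\<^sup>2 / eps\<^sup>2)"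
proof -
  have "Wq E (ps t) x0 \<le> (\<Sum>(i,j)\<in>E. 3 * (norm (proj_perp (bearing (p t) i j) (ee t $ i - ee t $ j)))\<^sup>2 +
      (12 * (norm (x0 - ee t))\<^sup>2 + 768 * (norm (ee t))\<^sup>2 * (norm x0)\<^sup>2 / eps\<^sup>2))"
    unfolding Wq_def
  proof (rule sum_mono)
    fix ij assume "ij \<in> E"
    obtain i j where ij: "ij = (i, j)" by fastforce
    have "norm (relpos (p t) i j) > eps" using sol_eps[OF assms] \<open>ij \<in> E\<close> ij by simp
    from edge_bound[OF this eps, of "ee t" "ps t" "centroid_proj (p t0 - ps t0)", OF _ centroid_const, of x0]
    show "(case ij of (i, j) \<Rightarrow> (norm (proj_perp (bearing (ps t) i j) (x0 $ i - x0 $ j)))\<^sup>2)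
         \<le> (case ij of (i, j) \<Rightarrow> 3 * (norm (proj_perp (bearing (p t) i j) (ee t $ i - ee t $ j)))\<^sup>2 +
      (12 * (norm (x0 - ee t))\<^sup>2 + 768 * (norm (ee t))\<^sup>2 * (norm x0)\<^sup>2 / eps\<^sup>2))"
      by (simp add: ij ee_def algebra_simps)
  qed
  also have "\<dots> = 3 * WW t + real (card E) * (12 * (norm (x0 - ee t))\<^sup>2 + 768 * (norm (ee t))\<^sup>2 * (norm x0)\<^sup>2 / eps\<^sup>2)"
    by (simp add: WW_def Wq_def sum.distrib sum_distrib_left case_prod_beta)
  finally show ?thesis .
qed

lemma decay:
  fixes T \<mu> K M \<eta> \<delta> \<theta> r :: real
  assumes PEx: "\<And>t x. t \<ge> 0 \<Longrightarrow> integral {t..t+T} (\<lambda>\<tau>. x \<bullet> bearing_laplacian E (ps \<tau>) x) \<ge> \<mu> * (x \<bullet> graph_laplacian E x)"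
    and T: "T > 0" and \<mu>: "\<mu> > 0" and K: "K > 0"
    and conn: "\<And>x::real^'d^'n. (\<Sum>i\<in>UNIV. x$i) = 0 \<Longrightarrow> (norm x)\<^sup>2 \<le> K * Sq E x"
    and M: "real (card E) \<le> M"
    and \<eta>: "\<eta> > 0" and \<delta>: "\<delta> > 0" and \<theta>: "\<theta> \<ge> 0"
    and P1: "\<eta> / (2 * \<delta>) + kp * M * \<delta> * T / 2 \<le> \<theta>"
    and P2: "3 * \<eta> / kp + T * M * (12 * \<theta>\<^sup>2 + 768 * r\<^sup>2 / eps\<^sup>2) \<le> \<mu> / K"
    and small: "norm (ee t0) < r"
    and t: "t \<ge> t0"
  shows "VV (t + T) \<le> (1 - \<eta>) * VV t"
proof (cases "ee t = 0")
  case True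
  then have "VV t = 0" by (simp add: VV_def)
  moreover have "VV (t + T) \<le> VV t" using VV_mono[OF t] T by simp
  ultimately show ?thesis by simp
next
  case False
  define x0 where "x0 = ee t"
  have x0: "norm x0 > 0" using False by (simp add: x0_def)
  have VVt: "VV t = (norm x0)\<^sup>2" by (simp add: VV_def x0_def)
  have M0: "M \<ge> 0" using M of_nat_0_le_iff order_trans by blast
  show ?thesis
  proof (rule ccontr)
    assume "\<not> ?thesis"
    then have Dlt: "VV t - VV (t + T) < \<eta> * (norm x0)\<^sup>2" by (simp add: VVt algebra_simps)
    have move: "norm (ee s - x0) \<le> \<theta> * norm x0" if s: "s \<in> {t..t+T}" for s
    proof -
      have "norm (ee s - x0) \<le> (VV t - VV s) / (2 * (\<delta> * norm x0)) + kp * real (card E) * (\<delta> * norm x0) * (s - t) / 2"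
        unfolding x0_def by (rule ee_move) (use s t \<delta> False in auto)
      also have "\<dots> \<le> (\<eta> * (norm x0)\<^sup>2) / (2 * (\<delta> * norm x0)) + kp * M * (\<delta> * norm x0) * T / 2"
      proof (intro add_mono divide_right_mono mult_mono mult_left_mono)
        have "VV (t + T) \<le> VV s" using VV_mono[of s "t + T"] s t by auto
        then show "VV t - VV s \<le> \<eta> * (norm x0)\<^sup>2" using Dlt by simp
      qed (use s kp \<delta> x0 M M0 in auto)
      also have "\<dots> = norm x0 * (\<eta> / (2 * \<delta>) + kp * M * \<delta> * T / 2)"
        using x0 \<delta> by (simp add: field_simps power2_eq_square)
      also have "\<dots> \<le> norm x0 * \<theta>" using P1 x0 by (intro mult_left_mono) auto
      finally show ?thesis by (simp add: mult.commute)
    qed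
    have er: "norm (ee s) \<le> r" if "s \<ge> t0" for s
    proof -
      have "VV s \<le> VV t0" using VV_mono[OF order_refl that] .
      then have "norm (ee s) \<le> norm (ee t0)" unfolding VV_def by (rule power2_le_imp_le) simp
      then show ?thesis using small by simp
    qed
    define Cc where "Cc = M * (12 * \<theta>\<^sup>2 + 768 * r\<^sup>2 / eps\<^sup>2) * (norm x0)\<^sup>2"
    have cmp: "x0 \<bullet> bearing_laplacian E (ps s) x0 \<le> 3 / 2 * WW s + Cc / 2" if s: "s \<in> {t..t+T}" for s
    proof -
      have st0: "s \<ge> t0" using s t by auto
      have "Wq E (ps s) x0 \<le> 3 * WW s + real (card E) * (12 * (norm (x0 - ee s))\<^sup>2 + 768 * (norm (ee s))\<^sup>2 * (norm x0)\<^sup>2 / eps\<^sup>2)"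
        by (rule pe_cmp[OF st0])
      also have "real (card E) * (12 * (norm (x0 - ee s))\<^sup>2 + 768 * (norm (ee s))\<^sup>2 * (norm x0)\<^sup>2 / eps\<^sup>2) \<le> Cc"
      proof -
        have a1: "(norm (x0 - ee s))\<^sup>2 \<le> \<theta>\<^sup>2 * (norm x0)\<^sup>2"
          using move[OF s] by (simp add: norm_minus_commute power_mono power_mult_distrib[symmetric])
        have a2: "(norm (ee s))\<^sup>2 \<le> r\<^sup>2" using er[OF st0] by (simp add: power_mono)
        have "12 * (norm (x0 - ee s))\<^sup>2 + 768 * (norm (ee s))\<^sup>2 * (norm x0)\<^sup>2 / eps\<^sup>2
              \<le> 12 * (\<theta>\<^sup>2 * (norm x0)\<^sup>2) + 768 * r\<^sup>2 * (norm x0)\<^sup>2 / eps\<^sup>2"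
          using a1 a2 eps by (intro add_mono mult_left_mono divide_right_mono mult_right_mono) auto
        also have "\<dots> = (12 * \<theta>\<^sup>2 + 768 * r\<^sup>2 / eps\<^sup>2) * (norm x0)\<^sup>2" by (simp add: algebra_simps)
        finally have "12 * (norm (x0 - ee s))\<^sup>2 + 768 * (norm (ee s))\<^sup>2 * (norm x0)\<^sup>2 / eps\<^sup>2 \<le> (12 * \<theta>\<^sup>2 + 768 * r\<^sup>2 / eps\<^sup>2) * (norm x0)\<^sup>2" .
        moreover have "0 \<le> 12 * (norm (x0 - ee s))\<^sup>2 + 768 * (norm (ee s))\<^sup>2 * (norm x0)\<^sup>2 / eps\<^sup>2" by simp
        ultimately show ?thesis unfolding Cc_def mult.assoc using M M0
          by (meson mult_mono of_nat_0_le_iff order_trans)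
      qed
      finally show ?thesis using BL_quad[OF symE, of x0 "ps s"] by simp
    qed
    have Lpos: "\<mu> * (x0 \<bullet> graph_laplacian E x0) \<ge> \<mu> / K * (norm x0)\<^sup>2 / 2"
    proof -
      have "(\<Sum>i\<in>UNIV. x0$i) = 0" unfolding x0_def by (rule ee_sum[OF t])
      then have "(norm x0)\<^sup>2 \<le> K * Sq E x0" by (rule conn)
      then have "(norm x0)\<^sup>2 / K \<le> Sq E x0" using K by (simp add: field_simps)
      then have "\<mu> * ((norm x0)\<^sup>2 / K) \<le> \<mu> * Sq E x0" using \<mu> by (intro mult_left_mono) auto
      moreover have "\<mu> * Sq E x0 = 2 * (\<mu> * (x0 \<bullet> graph_laplacian E x0))"
        using L_quad[OF symE, of x0] by simp
      moreover have "\<And>a S Q::real. a \<le> S \<Longrightarrow> S = 2 * Q \<Longrightarrow> a / 2 \<le> Q" by linarith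
      ultimately have "\<mu> * ((norm x0)\<^sup>2 / K) / 2 \<le> \<mu> * (x0 \<bullet> graph_laplacian E x0)" by blast
      moreover have "\<mu> / K * (norm x0)\<^sup>2 / 2 = \<mu> * ((norm x0)\<^sup>2 / K) / 2" by simp
      ultimately show ?thesis by simp
    qed
    have pos: "\<mu> / K * (norm x0)\<^sup>2 / 2 > 0" using \<mu> K x0 by simp
    have PE1: "integral {t..t+T} (\<lambda>\<tau>. x0 \<bullet> bearing_laplacian E (ps \<tau>) x0) \<ge> \<mu> / K * (norm x0)\<^sup>2 / 2"
      using PEx[of t x0] Lpos t t0 by simp
    then have intg: "(\<lambda>\<tau>. x0 \<bullet> bearing_laplacian E (ps \<tau>) x0) integrable_on {t..t+T}"
      using pos not_integrable_integral by fastforce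
    have WWi: "((\<lambda>\<tau>. 3 / 2 * WW \<tau> + Cc / 2) has_integral (3 / 2 * ((VV t - VV (t + T)) / kp) + T * (Cc / 2))) {t..t+T}"
    proof -
      have "((\<lambda>\<tau>. (- 3 / (2 * kp)) * (- kp * WW \<tau>)) has_integral ((- 3 / (2 * kp)) * (VV (t + T) - VV t))) {t..t+T}"
        by (rule has_integral_cmult_real[OF VV_int]) (use t T in auto)
      moreover have "(\<lambda>\<tau>. (- 3 / (2 * kp)) * (- kp * WW \<tau>)) = (\<lambda>\<tau>. 3 / 2 * WW \<tau>)" using kp by auto
      moreover have "(- 3 / (2 * kp)) * (VV (t + T) - VV t) = 3 / 2 * ((VV t - VV (t + T)) / kp)"
        using kp by (simp add: field_simps)
      ultimately have h1: "((\<lambda>\<tau>. 3 / 2 * WW \<tau>) has_integral (3 / 2 * ((VV t - VV (t + T)) / kp))) {t..t+T}" by simp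
      have h2: "((\<lambda>\<tau>. Cc / 2) has_integral (T * (Cc / 2))) {t..t+T}"
        using has_integral_const_real[of "Cc / 2" t "t + T"] T by (simp add: content_real)
      show ?thesis by (rule has_integral_add[OF h1 h2])
    qed
    have "integral {t..t+T} (\<lambda>\<tau>. x0 \<bullet> bearing_laplacian E (ps \<tau>) x0) \<le> 3 / 2 * ((VV t - VV (t + T)) / kp) + T * (Cc / 2)"
      by (rule has_integral_le[OF integrable_integral[OF intg] WWi]) (rule cmp)
    also have "\<dots> < 3 / 2 * (\<eta> * (norm x0)\<^sup>2 / kp) + T * (Cc / 2)"
      using Dlt kp by (simp add: divide_strict_right_mono)
    also have "\<dots> = (3 * \<eta> / kp + T * M * (12 * \<theta>\<^sup>2 + 768 * r\<^sup>2 / eps\<^sup>2)) * (norm x0)\<^sup>2 / 2"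
      by (simp add: Cc_def field_simps)
    also have "\<dots> \<le> \<mu> / K * (norm x0)\<^sup>2 / 2"
      using P2 by (intro divide_right_mono mult_right_mono) auto
    finally show False using PE1 by simp
  qed
qed

end



lemma exp_wrap:
  fixes V :: "real \<Rightarrow> real" and T \<eta> t0 t :: real
  assumes nn: "\<And>t. t \<ge> t0 \<Longrightarrow> V t \<ge> 0" and mono: "\<And>a b. t0 \<le> a \<Longrightarrow> a \<le> b \<Longrightarrow> V b \<le> V a"
    and step: "\<And>t. t \<ge> t0 \<Longrightarrow> V (t + T) \<le> (1 - \<eta>) * V t" and T: "T > 0" and \<eta>: "0 < \<eta>" "\<eta> \<le> 1"
    and t: "t \<ge> t0"
  shows "V t \<le> 3 * exp (- (\<eta> / T) * (t - t0)) * V t0"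
proof -
  have V0: "V t0 \<ge> 0" using nn by simp
  have ind: "V (t0 + real k * T) \<le> (1 - \<eta>) ^ k * V t0" for k :: nat
  proof (induction k)
    case 0 then show ?case by simp
  next
    case (Suc k)
    have "V (t0 + real (Suc k) * T) = V ((t0 + real k * T) + T)" by (simp add: algebra_simps)
    also have "\<dots> \<le> (1 - \<eta>) * V (t0 + real k * T)" by (rule step) (use T in simp)
    also have "\<dots> \<le> (1 - \<eta>) * ((1 - \<eta>) ^ k * V t0)" using Suc \<eta> by (intro mult_left_mono) auto
    finally show ?case by simp
  qed
  define x where "x = (t - t0) / T"
  have x0: "x \<ge> 0" using t T by (simp add: x_def)
  define k where "k = nat \<lfloor>x\<rfloor>"
  have rk: "real k = of_int \<lfloor>x\<rfloor>" using x0 by (simp add: k_def)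
  have fl1: "real k \<le> x" using rk by simp
  have fl2: "x < real k + 1" using rk by linarith
  have "real k * T \<le> t - t0" using fl1 T by (simp add: x_def pos_le_divide_eq)
  then have "V t \<le> V (t0 + real k * T)" using T by (intro mono) auto
  also have "\<dots> \<le> (1 - \<eta>) ^ k * V t0" by (rule ind)
  also have "\<dots> \<le> exp (- \<eta>) ^ k * V t0"
  proof -
    have "1 - \<eta> \<le> exp (- \<eta>)" using exp_ge_add_one_self[of "- \<eta>"] by simp
    then have "(1 - \<eta>) ^ k \<le> exp (- \<eta>) ^ k" using \<eta> by (intro power_mono) auto
    then show ?thesis using V0 by (intro mult_right_mono) auto
  qed
  also have "exp (- \<eta>) ^ k = exp (real k * (- \<eta>))" using exp_of_nat_mult[of k "- \<eta>"] by simp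
  also have "exp (real k * (- \<eta>)) \<le> exp (\<eta> + (- (\<eta> / T) * (t - t0)))"
  proof -
    have "\<eta> * x < \<eta> * (real k + 1)" using fl2 \<eta> by simp
    then have "real k * (- \<eta>) \<le> \<eta> + (- (\<eta> / T) * (t - t0))"
      by (simp add: x_def algebra_simps)
    then show ?thesis by simp
  qed
  also have "\<dots> = exp \<eta> * exp (- (\<eta> / T) * (t - t0))" by (rule exp_add)
  also have "\<dots> \<le> 3 * exp (- (\<eta> / T) * (t - t0))"
  proof -
    have "exp \<eta> \<le> exp 1" using \<eta> by simp
    then have "exp \<eta> \<le> 3" using exp_le by linarith
    then show ?thesis by (intro mult_right_mono) auto
  qed
  finally show ?thesis using V0 by (simp add: mult_right_mono)
qed


theorem theorem2:
  fixes E :: "('n::finite \<times> 'n) set"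
    and ps vs :: "real \<Rightarrow> real^'d::finite^'n"
    and kp eps :: real
  assumes d2: "CARD('d) \<ge> 2"
    and n2: "CARD('n) \<ge> 2"
    and graph: "undirected_graph E"
    and tree: "has_spanning_tree E"
    and deriv_ps: "\<And>t. t \<ge> 0 \<Longrightarrow> (ps has_vector_derivative vs t) (at t within {0..})"
    and vs_bdd: "\<exists>B. \<forall>t\<ge>0. \<forall>i. norm (vs t $ i) \<le> B"
    and well_def: "\<And>t i j. t \<ge> 0 \<Longrightarrow> (i, j) \<in> E \<Longrightarrow> ps t $ i \<noteq> ps t $ j"
    and PE: "bearing_PE_formation E ps"
    and eps: "eps > 0"
    and kp: "kp > 0"
  shows "error_equilibrium_exp_stable E kp ps vs eps"
proof -
  have symE: "sym E" using graph by (simp add: undirected_graph_def)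
  obtain T \<mu> where T: "T > 0" and \<mu>: "\<mu> > 0"
    and PEx: "\<And>t x. t \<ge> 0 \<Longrightarrow> integral {t..t+T} (\<lambda>\<tau>. x \<bullet> bearing_laplacian E (ps \<tau>) x) \<ge> \<mu> * (x \<bullet> graph_laplacian E x)"
    using PE unfolding bearing_PE_formation_def bearing_laplacian_PE_def by blast
  obtain K where K: "K > 0" and conn: "\<And>x::real^'d^'n. (\<Sum>i\<in>UNIV. x$i) = 0 \<Longrightarrow> (norm x)\<^sup>2 \<le> K * Sq E x"
    using conn_bound[OF tree] by blast
  define A where "A = \<mu> / K"
  define M where "M = real (card E) + 1"
  define \<theta> where "\<theta> = min 1 (A / (48 * M * T))"
  define \<rho> where "\<rho> = min 1 (A / (3072 * M * T))"
  define r where "r = eps * \<rho>"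
  define \<delta> where "\<delta> = \<theta> / (kp * M * T)"
  define \<eta> where "\<eta> = min (\<delta> * \<theta>) (min (kp * A / 12) (1 / 2))"
  have A: "A > 0" using \<mu> K by (simp add: A_def)
  have M: "M > 0" "real (card E) \<le> M" by (simp_all add: M_def)
  have \<theta>: "\<theta> > 0" "\<theta> \<le> 1" "\<theta> \<le> A / (48 * M * T)" using A M T by (simp_all add: \<theta>_def)
  have \<rho>: "\<rho> > 0" "\<rho> \<le> 1" "\<rho> \<le> A / (3072 * M * T)" using A M T by (simp_all add: \<rho>_def)
  have r: "r > 0" using eps \<rho> by (simp add: r_def)
  have \<delta>: "\<delta> > 0" using \<theta> kp M T by (simp add: \<delta>_def)
  have \<eta>: "\<eta> > 0" "\<eta> \<le> 1/2" "\<eta> \<le> \<delta> * \<theta>" "\<eta> \<le> kp * A / 12"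
    using \<delta> \<theta> kp A by (simp_all add: \<eta>_def)
  have P1: "\<eta> / (2 * \<delta>) + kp * M * \<delta> * T / 2 \<le> \<theta>"
  proof -
    have "\<eta> / (2 * \<delta>) \<le> (\<delta> * \<theta>) / (2 * \<delta>)" using \<eta> \<delta> by (intro divide_right_mono) auto
    also have "\<dots> = \<theta> / 2" using \<delta> by simp
    finally have a: "\<eta> / (2 * \<delta>) \<le> \<theta> / 2" .
    have b: "kp * M * \<delta> * T / 2 = \<theta> / 2" using kp M T by (simp add: \<delta>_def)
    show ?thesis using a b by linarith
  qed
  have P2: "3 * \<eta> / kp + T * M * (12 * \<theta>\<^sup>2 + 768 * r\<^sup>2 / eps\<^sup>2) \<le> \<mu> / K"
  proof -
    have a: "3 * \<eta> / kp \<le> A / 4"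
    proof -
      have "3 * \<eta> \<le> 3 * (kp * A / 12)" using \<eta>(4) by (simp add: mult.commute)
      then show ?thesis using kp by (simp add: divide_simps)
    qed
    have b: "T * M * (12 * \<theta>\<^sup>2) \<le> A / 4"
    proof -
      have "\<theta>\<^sup>2 \<le> \<theta>" using \<theta> by (simp add: power2_eq_square mult_left_le)
      also have "\<dots> \<le> A / (48 * M * T)" by (rule \<theta>(3))
      finally have "T * M * (12 * \<theta>\<^sup>2) \<le> T * M * (12 * (A / (48 * M * T)))"
        using T M by (intro mult_left_mono) auto
      also have "\<dots> = A / 4" using T M by (simp add: field_simps)
      finally show ?thesis .
    qed
    have c: "T * M * (768 * r\<^sup>2 / eps\<^sup>2) \<le> A / 4"
    proof -
      have "r\<^sup>2 / eps\<^sup>2 = \<rho>\<^sup>2" using eps by (simp add: r_def power_mult_distrib)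
      also have "\<rho>\<^sup>2 \<le> \<rho>" using \<rho> by (simp add: power2_eq_square mult_left_le)
      also have "\<dots> \<le> A / (3072 * M * T)" by (rule \<rho>(3))
      finally have "T * M * (768 * (r\<^sup>2 / eps\<^sup>2)) \<le> T * M * (768 * (A / (3072 * M * T)))"
        using T M by (intro mult_left_mono) auto
      also have "\<dots> = A / 4" using T M by (simp add: field_simps)
      finally show ?thesis by simp
    qed
    have "T * M * (12 * \<theta>\<^sup>2 + 768 * r\<^sup>2 / eps\<^sup>2) = T * M * (12 * \<theta>\<^sup>2) + T * M * (768 * r\<^sup>2 / eps\<^sup>2)"
      by (simp add: algebra_simps)
    then show ?thesis using a b c A by (simp add: A_def)
  qed
  show ?thesis
    unfolding error_equilibrium_exp_stable_def
  proof (rule exI[of _ 2], rule exI[of _ "\<eta> / (2 * T)"], rule exI[of _ r], intro conjI allI impI)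
    show "(0::real) < 2" by simp
    show "0 < \<eta> / (2 * T)" using \<eta> T by simp
    show "0 < r" by (rule r)
    fix t0 :: real and p :: "real \<Rightarrow> real^'d^'n"
    assume t0: "t0 \<ge> 0" and sol: "closed_loop_solution E kp ps vs eps t0 p"
    note ctx = symE kp eps t0 deriv_ps sol
    have eeq: "p t - ps t - centroid_proj (p t0 - ps t0) = ee t0 ps p t" for t
      using ee_def[OF ctx] by simp
    show "let pt = (\<lambda>t. p t - ps t); pe = centroid_proj (pt t0) in
          norm (pt t0 - pe) < r \<longrightarrow>
          (\<forall>t\<ge>t0. norm (pt t - pe) \<le> 2 * norm (pt t0 - pe) * exp (- (\<eta> / (2 * T)) * (t - t0)))"
      unfolding Let_def eeq
    proof (intro impI allI)
      fix t assume small: "norm (ee t0 ps p t0) < r" and t: "t0 \<le> t"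
      have step: "VV t0 ps p (s + T) \<le> (1 - \<eta>) * VV t0 ps p s" if "s \<ge> t0" for s
        using decay[OF ctx PEx T \<mu> K conn M(2) \<eta>(1) \<delta> less_imp_le[OF \<theta>(1)] P1 P2 small that] .
      have Vb: "VV t0 ps p t \<le> 3 * exp (- (\<eta> / T) * (t - t0)) * VV t0 ps p t0"
      proof (rule exp_wrap[of t0 "VV t0 ps p" T \<eta> t])
        show "\<And>s. t0 \<le> s \<Longrightarrow> VV t0 ps p (s + T) \<le> (1 - \<eta>) * VV t0 ps p s" by (rule step)
        show "0 < T" "0 < \<eta>" "t0 \<le> t" using T \<eta> t by auto
        show "\<And>s. t0 \<le> s \<Longrightarrow> 0 \<le> VV t0 ps p s" using VV_def[OF ctx] by simp
        show "\<And>a b. t0 \<le> a \<Longrightarrow> a \<le> b \<Longrightarrow> VV t0 ps p b \<le> VV t0 ps p a" by (rule VV_mono[OF ctx])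
        show "\<eta> \<le> 1" using \<eta> by simp
      qed
      define z where "z = exp (- (\<eta> / (2 * T)) * (t - t0))"
      have z2: "z\<^sup>2 = exp (- (\<eta> / T) * (t - t0))"
      proof -
        have "2 * (- (\<eta> / (2 * T)) * (t - t0)) = - (\<eta> / T) * (t - t0)" using T by (simp add: field_simps)
        then show ?thesis unfolding z_def exp_double[symmetric] by simp
      qed
      have "(norm (ee t0 ps p t))\<^sup>2 \<le> 3 * z\<^sup>2 * (norm (ee t0 ps p t0))\<^sup>2"
        using Vb unfolding z2 by (simp add: VV_def[OF ctx])
      also have "\<dots> \<le> 4 * z\<^sup>2 * (norm (ee t0 ps p t0))\<^sup>2" by (intro mult_right_mono) auto
      also have "\<dots> = (2 * norm (ee t0 ps p t0) * z)\<^sup>2" by (simp add: power_mult_distrib)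
      finally have "norm (ee t0 ps p t) \<le> 2 * norm (ee t0 ps p t0) * z"
        by (rule power2_le_imp_le) (simp add: z_def)
      then show "norm (ee t0 ps p t) \<le> 2 * norm (ee t0 ps p t0) * exp (- (\<eta> / (2 * T)) * (t - t0))"
        by (simp add: z_def)
    qed
  qed
qed


end
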